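(* Let $m\ge2$ and let $\tau$ be a labeled rooted tree on vertex set $[1,m]$. Then for all integers $n$ and $l,a\ge1$, $$E_\tau^{(l+a,n)}=\sum_{\mu\in\mathcal M_\tau}\mathcal E_\tau^{\mu}(a;\,n-l\to n).$$
   Context: Fix $\beta\in(0,1)$ and sufficiently smooth losses $L^{(s)}$ (for integer $s<0$ the corresponding terms never occur since sums are empty). $\nabla^kF$ is the $k$-th derivative (symmetric $k$-linear map). Empty sums are $0$. For a rooted tree $\tau$ whose root has children subtrees $\tau_1,\dots,\tau_\ell$ ($\ell\ge0$), integer $n$ and integer $l\ge1$, define recursively $$E_\tau^{(l,n)}(\theta)=\sum_{b=0}^{n-l}\beta^b\nabla^{\ell+1}L^{(n-l-b)}(\theta)\Big[\sum_{l_1=1}^{l+b}E_{\tau_1}^{(l_1,n)}(\theta),\dots,\sum_{l_\ell=1}^{l+b}E_{\tau_\ell}^{(l_\ell,n)}(\theta)\Big]$$ (it depends only on the isomorphism class of $\tau$). A marking $\mu$ of a labeled rooted tree $\tau$ is a set of non-root vertices such that no marked vertex has another marked vertex in its subtree (i.e., no marked vertex is a descendant of another); $\mathcal M_\tau$ is the set of all markings (including $\varnothing$). For a labeled rooted tree $\tau$ with root $r$, children $v_1,\dots,v_\ell$ of $r$, subtrees $\tau_1,\dots,\tau_\ell$ rooted at them with vertex sets $V_1,\dots,V_\ell$, a marking $\mu\in\mathcal M_\tau$, and integers $n$, $l\ge1$, $a\ge1$, define recursively $$\mathcal E_\tau^{\mu}(a;\,n-l\to n)=\sum_{b=0}^{n-l-a}\beta^b\nabla^{\ell+1}L^{(n-l-a-b)}\big[X_1,\dots,X_\ell\big],$$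 where $X_s=\sum_{l'=1}^{l}E_{\tau_s}^{(l',n)}$ if $v_s\in\mu$, and $X_s=\sum_{l'=1}^{a+b}\mathcal E_{\tau_s}^{\mu\cap V_s}(l';\,n-l\to n)$ if $v_s\notin\mu$. (For a single-vertex tree and $\mu=\varnothing$ this gives $\sum_{b=0}^{n-l-a}\beta^b\nabla L^{(n-l-a-b)}$.) *)

theory Defs
  imports Complex_Main "HOL-Library.Multiset"
begin

datatype ltree = LNode nat "ltree list"

fun root :: "ltree \<Rightarrow> nat" where
  "root (LNode x cs) = x"

fun children :: "ltree \<Rightarrow> ltree list" where
  "children (LNode x cs) = cs"

fun label_list :: "ltree \<Rightarrow> nat list" where
  "label_list (LNode x cs) = x # concat (map label_list cs)"

definition labels :: "ltree \<Rightarrow> nat set" where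
  "labels t = set (label_list t)"

definition labeled_tree_on :: "ltree \<Rightarrow> nat set \<Rightarrow> bool" where
  "labeled_tree_on t V \<longleftrightarrow> distinct (label_list t) \<and> labels t = V"

fun subtrees :: "ltree \<Rightarrow> ltree set" where
  "subtrees (LNode x cs) = insert (LNode x cs) (\<Union>c\<in>set cs. subtrees c)"

definition markings :: "ltree \<Rightarrow> nat set set" where
  "markings t = {\<mu>. \<mu> \<subseteq> labels t - {root t} \<and>
      (\<forall>s\<in>subtrees t. root s \<in> \<mu> \<longrightarrow> (labels s - {root s}) \<inter> \<mu> = {})}"

text \<open>Abstract model of the derivatives: \<open>D s \<theta> xs\<close> stands for
 \<open>\<nabla>^(length xs + 1) L^(s)(\<theta>)[xs]\<close> (a vector).\<close>

definition sym_multilinear :: "(int \<Rightarrow> 'v::real_vector \<Rightarrow> 'v list \<Rightarrow> 'v) \<Rightarrow> bool" where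
  "sym_multilinear D \<longleftrightarrow>
     (\<forall>s \<theta> xs x y ys. D s \<theta> (xs @ (x + y) # ys) = D s \<theta> (xs @ x # ys) + D s \<theta> (xs @ y # ys)) \<and>
     (\<forall>s \<theta> xs c x ys. D s \<theta> (xs @ (c *\<^sub>R x) # ys) = c *\<^sub>R D s \<theta> (xs @ x # ys)) \<and>
     (\<forall>s \<theta> xs ys. mset xs = mset ys \<longrightarrow> D s \<theta> xs = D s \<theta> ys)"

fun Etree :: "real \<Rightarrow> (int \<Rightarrow> 'v::real_vector \<Rightarrow> 'v list \<Rightarrow> 'v) \<Rightarrow> 'v \<Rightarrow> ltree \<Rightarrow> int \<Rightarrow> int \<Rightarrow> 'v" where
  "Etree \<beta> D \<theta> (LNode x cs) l n =
     (\<Sum>b\<in>{0..n-l}. \<beta> ^ nat b *\<^sub>R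
        D (n - l - b) \<theta> (map (\<lambda>c. \<Sum>l1\<in>{1..l+b}. Etree \<beta> D \<theta> c l1 n) cs))"

text \<open>\<open>calE \<beta> D \<theta> t \<mu> a n l\<close> is \<open>\<E>_t^\<mu>(a; n-l \<rightarrow> n)\<close>.\<close>

fun calE :: "real \<Rightarrow> (int \<Rightarrow> 'v::real_vector \<Rightarrow> 'v list \<Rightarrow> 'v) \<Rightarrow> 'v \<Rightarrow> ltree \<Rightarrow> nat set
              \<Rightarrow> int \<Rightarrow> int \<Rightarrow> int \<Rightarrow> 'v" where
  "calE \<beta> D \<theta> (LNode x cs) \<mu> a n l =
     (\<Sum>b\<in>{0..n-l-a}. \<beta> ^ nat b *\<^sub>R
        D (n - l - a - b) \<theta>
          (map (\<lambda>c. if root c \<in> \<mu> then (\<Sum>l'\<in>{1..l}. Etree \<beta> D \<theta> c l' n)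
                    else (\<Sum>l'\<in>{1..a+b}. calE \<beta> D \<theta> c (\<mu> \<inter> labels c) l' n l)) cs))"

end

theory Submission
  imports Defs
begin


lemma labels_LNode: "labels (LNode x cs) = insert x (\<Union>c\<in>set cs. labels c)"
  by (auto simp: labels_def)

lemma root_in_labels: "root t \<in> labels t"
  by (cases t) (auto simp: labels_def)

lemma finite_labels: "finite (labels t)"
  by (simp add: labels_def)

lemma self_in_subtrees: "t \<in> subtrees t"
  by (cases t) auto

lemma subtrees_labels: "s \<in> subtrees t \<Longrightarrow> labels s \<subseteq> labels t"
proof (induction t)
  case (LNode x cs)
  then show ?case by (auto simp: labels_LNode)
qed

lemma subtrees_trans: "s \<in> subtrees c \<Longrightarrow> c \<in> set cs \<Longrightarrow> s \<in> subtrees (LNode x cs)"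
  by auto

lemma finite_markings: "finite (markings t)"
proof -
  have "markings t \<subseteq> Pow (labels t)" by (auto simp: markings_def)
  then show ?thesis using finite_labels by (meson finite_Pow_iff finite_subset)
qed

definition Mset :: "ltree list \<Rightarrow> nat set set" where
  "Mset cs = {\<mu>. \<mu> \<subseteq> (\<Union>c\<in>set cs. labels c) \<and>
     (\<forall>c\<in>set cs. \<mu> \<inter> labels c = {root c} \<or> \<mu> \<inter> labels c \<in> markings c)}"

lemma markings_LNode:
  assumes "x \<notin> (\<Union>c\<in>set cs. labels c)"
  shows "markings (LNode x cs) = Mset cs"
proof
  show "markings (LNode x cs) \<subseteq> Mset cs"
  proof
    fix \<mu> assume m: "\<mu> \<in> markings (LNode x cs)"
    have sub: "\<mu> \<subseteq> (\<Union>c\<in>set cs. labels c)" using m by (auto simp: markings_def labels_LNode)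
    have "\<mu> \<inter> labels c = {root c} \<or> \<mu> \<inter> labels c \<in> markings c" if c: "c \<in> set cs" for c
    proof (cases "root c \<in> \<mu>")
      case True
      have "c \<in> subtrees (LNode x cs)" using c self_in_subtrees by auto
      then have "(labels c - {root c}) \<inter> \<mu> = {}" using m True by (auto simp: markings_def)
      then show ?thesis using True root_in_labels[of c] by blast
    next
      case False
      have "(labels s - {root s}) \<inter> (\<mu> \<inter> labels c) = {}"
        if s: "s \<in> subtrees c" "root s \<in> \<mu> \<inter> labels c" for s
      proof -
        have "s \<in> subtrees (LNode x cs)" using s c by auto
        then have "(labels s - {root s}) \<inter> \<mu> = {}" using m s by (auto simp: markings_def)
        then show ?thesis by blast
      qed
      then have "\<mu> \<inter> labels c \<in> markings c"
        unfolding markings_def using False by auto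
      then show ?thesis by blast
    qed
    then show "\<mu> \<in> Mset cs" using sub by (auto simp: Mset_def)
  qed
next
  show "Mset cs \<subseteq> markings (LNode x cs)"
  proof
    fix \<mu> assume m: "\<mu> \<in> Mset cs"
    have sub: "\<mu> \<subseteq> labels (LNode x cs) - {root (LNode x cs)}"
      using m assms by (auto simp: Mset_def labels_LNode)
    have "(labels s - {root s}) \<inter> \<mu> = {}" if s: "s \<in> subtrees (LNode x cs)" "root s \<in> \<mu>" for s
    proof (cases "s = LNode x cs")
      case True
      then show ?thesis using sub s by auto
    next
      case False
      then obtain c where c: "c \<in> set cs" "s \<in> subtrees c" using s by auto
      have ls: "labels s \<subseteq> labels c" using subtrees_labels[OF c(2)] .
      have rs: "root s \<in> labels c" using ls root_in_labels by blast
      from m c(1) have "\<mu> \<inter> labels c = {root c} \<or> \<mu> \<inter> labels c \<in> markings c" by (auto simp: Mset_def)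
      then show ?thesis
      proof
        assume h: "\<mu> \<inter> labels c = {root c}"
        then have "root s = root c" using rs s(2) by blast
        have "\<mu> \<inter> labels s \<subseteq> \<mu> \<inter> labels c" using ls by blast
        then have "\<mu> \<inter> labels s \<subseteq> {root s}" unfolding h \<open>root s = root c\<close> .
        then show ?thesis by blast
      next
        assume h: "\<mu> \<inter> labels c \<in> markings c"
        then have "(labels s - {root s}) \<inter> (\<mu> \<inter> labels c) = {}"
          using c(2) rs s(2) by (auto simp: markings_def)
        then show ?thesis using ls by blast
      qed
    qed
    then show "\<mu> \<in> markings (LNode x cs)" using sub by (auto simp: markings_def)
  qed
qed

lemma Mset_Cons:
  assumes "labels c \<inter> (\<Union>c'\<in>set cs. labels c') = {}"
  shows "Mset (c # cs) = (\<lambda>(S, \<mu>'). S \<union> \<mu>') ` ((insert {root c} (markings c)) \<times> Mset cs)"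
proof
  have cn: "c \<notin> set cs" using assms root_in_labels[of c] by blast
  show "Mset (c # cs) \<subseteq> (\<lambda>(S, \<mu>'). S \<union> \<mu>') ` ((insert {root c} (markings c)) \<times> Mset cs)"
  proof
    fix \<mu> assume m: "\<mu> \<in> Mset (c # cs)"
    define S where "S = \<mu> \<inter> labels c"
    define \<mu>' where "\<mu>' = \<mu> \<inter> (\<Union>c'\<in>set cs. labels c')"
    have e: "\<mu> = S \<union> \<mu>'" using m by (auto simp: Mset_def S_def \<mu>'_def)
    have S: "S \<in> insert {root c} (markings c)" using m by (auto simp: Mset_def S_def)
    have "\<mu>' \<inter> labels c' = \<mu> \<inter> labels c'" if "c' \<in> set cs" for c'
      using that by (auto simp: \<mu>'_def)
    then have "\<mu>' \<in> Mset cs" using m by (auto simp: Mset_def \<mu>'_def)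
    then show "\<mu> \<in> (\<lambda>(S, \<mu>'). S \<union> \<mu>') ` ((insert {root c} (markings c)) \<times> Mset cs)"
      using e S by auto
  qed
next
  show "(\<lambda>(S, \<mu>'). S \<union> \<mu>') ` ((insert {root c} (markings c)) \<times> Mset cs) \<subseteq> Mset (c # cs)"
  proof clarify
    fix S \<mu>' assume S: "S \<in> insert {root c} (markings c)" and m: "\<mu>' \<in> Mset cs"
    have Sl: "S \<subseteq> labels c" using S root_in_labels[of c] by (auto simp: markings_def)
    have ml: "\<mu>' \<subseteq> (\<Union>c'\<in>set cs. labels c')" using m by (auto simp: Mset_def)
    have e1: "(S \<union> \<mu>') \<inter> labels c = S" using Sl ml assms by blast
    have e2: "(S \<union> \<mu>') \<inter> labels c' = \<mu>' \<inter> labels c'" if "c' \<in> set cs" for c'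
      using Sl assms that by blast
    show "S \<union> \<mu>' \<in> Mset (c # cs)"
      unfolding Mset_def using e1 e2 S m Sl ml by (auto simp: Mset_def)
  qed
qed

lemma Mset_Nil: "Mset [] = {{}}"
  by (auto simp: Mset_def)

lemma finite_Mset: "finite (Mset cs)"
proof -
  have "Mset cs \<subseteq> Pow (\<Union>c\<in>set cs. labels c)" by (auto simp: Mset_def)
  then show ?thesis using finite_labels by (meson finite_Pow_iff finite_subset finite_UN finite_set)
qed

lemma D_zero:
  assumes "sym_multilinear D"
  shows "D s \<theta> (xs @ 0 # ys) = 0"
proof -
  have "D s \<theta> (xs @ ((0::real) *\<^sub>R 0) # ys) = (0::real) *\<^sub>R D s \<theta> (xs @ 0 # ys)"
    using assms unfolding sym_multilinear_def by blast
  then show ?thesis by simp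
qed

lemma D_sum:
  assumes "sym_multilinear D" "finite I"
  shows "D s \<theta> (xs @ (\<Sum>i\<in>I. f i) # ys) = (\<Sum>i\<in>I. D s \<theta> (xs @ f i # ys))"
  using assms(2)
proof (induction I rule: finite_induct)
  case empty
  then show ?case using D_zero[OF assms(1)] by simp
next
  case (insert i I)
  have "D s \<theta> (xs @ (f i + (\<Sum>i\<in>I. f i)) # ys) = D s \<theta> (xs @ f i # ys) + D s \<theta> (xs @ (\<Sum>i\<in>I. f i) # ys)"
    using assms(1) unfolding sym_multilinear_def by blast
  then show ?case using insert by simp
qed

lemma D_add:
  assumes "sym_multilinear D"
  shows "D s \<theta> (xs @ (x + y) # ys) = D s \<theta> (xs @ x # ys) + D s \<theta> (xs @ y # ys)"
  using assms unfolding sym_multilinear_def by blast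

lemma expand:
  assumes D: "sym_multilinear D" and dist: "distinct (concat (map label_list cs))"
  shows "D s \<theta> (pre @ map (\<lambda>c. A c + (\<Sum>\<nu>\<in>markings c. B c \<nu>)) cs) =
    (\<Sum>\<mu>\<in>Mset cs. D s \<theta> (pre @ map (\<lambda>c. if root c \<in> \<mu> then A c else B c (\<mu> \<inter> labels c)) cs))"
  using dist
proof (induction cs arbitrary: pre)
  case Nil
  then show ?case by (simp add: Mset_Nil)
next
  case (Cons c cs)
  define f where "f = (\<lambda>\<mu> c. if root c \<in> \<mu> then A c else B c (\<mu> \<inter> labels c))"
  have dcs: "distinct (concat (map label_list cs))" using Cons.prems by simp
  have disj: "labels c \<inter> (\<Union>c'\<in>set cs. labels c') = {}"
    using Cons.prems by (auto simp: labels_def)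
  have IH: "\<And>pre. D s \<theta> (pre @ map (\<lambda>c. A c + (\<Sum>\<nu>\<in>markings c. B c \<nu>)) cs) =
      (\<Sum>\<mu>'\<in>Mset cs. D s \<theta> (pre @ map (f \<mu>') cs))"
    using Cons.IH[OF dcs] unfolding f_def by simp
  have rc: "{root c} \<notin> markings c" by (auto simp: markings_def)
  have inj: "inj_on (\<lambda>(S, \<mu>'). S \<union> \<mu>') ((insert {root c} (markings c)) \<times> Mset cs)"
  proof (rule inj_onI, clarify)
    fix S1 m1 S2 m2 assume h: "S1 \<in> insert {root c} (markings c)" "m1 \<in> Mset cs"
      "S2 \<in> insert {root c} (markings c)" "m2 \<in> Mset cs" "S1 \<union> m1 = S2 \<union> m2"
    have "S1 \<subseteq> labels c" "S2 \<subseteq> labels c" using h root_in_labels[of c] by (auto simp: markings_def)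
    moreover have "m1 \<subseteq> (\<Union>c'\<in>set cs. labels c')" "m2 \<subseteq> (\<Union>c'\<in>set cs. labels c')"
      using h by (auto simp: Mset_def)
    ultimately show "S1 = S2 \<and> m1 = m2" using h(5) disj by blast
  qed
  have termo: "f (S \<union> \<mu>') c' = f \<mu>' c'" if "S \<subseteq> labels c" "c' \<in> set cs" for S \<mu>' c'
  proof -
    have "root c' \<in> labels c'" by (rule root_in_labels)
    then have "labels c' \<inter> labels c = {}" using disj that(2) by blast
    then have "S \<inter> labels c' = {}" using that(1) by blast
    moreover have "root c' \<notin> S" using \<open>root c' \<in> labels c'\<close> calculation by blast
    ultimately show ?thesis unfolding f_def by (simp add: Int_Un_distrib2)
  qed
  have termc: "f (S \<union> \<mu>') c = f S c" if "S \<subseteq> labels c" "\<mu>' \<in> Mset cs" for S \<mu>'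
  proof -
    have "\<mu>' \<subseteq> (\<Union>c'\<in>set cs. labels c')" using that(2) by (auto simp: Mset_def)
    then have "\<mu>' \<inter> labels c = {}" using disj by blast
    then show ?thesis unfolding f_def using that(1) root_in_labels[of c] by (auto simp: Int_Un_distrib2)
  qed
  have g: "D s \<theta> (pre @ map (f (S \<union> \<mu>')) (c # cs)) = D s \<theta> ((pre @ [f S c]) @ map (f \<mu>') cs)"
    if "S \<subseteq> labels c" "\<mu>' \<in> Mset cs" for S \<mu>'
  proof -
    have mm: "map (f (S \<union> \<mu>')) cs = map (f \<mu>') cs" using termo[OF that(1)] by simp
    show ?thesis by (simp add: mm termc[OF that])
  qed
  have fS1: "f {root c} c = A c" unfolding f_def by simp
  have fS2: "f S c = B c S" if "S \<in> markings c" for S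
  proof -
    have "S \<subseteq> labels c" "root c \<notin> S" using that by (auto simp: markings_def)
    then show ?thesis unfolding f_def by (simp add: Int_absorb2)
  qed
  have Sl: "S \<subseteq> labels c" if "S \<in> insert {root c} (markings c)" for S
    using that root_in_labels[of c] by (auto simp: markings_def)
  have "(\<Sum>\<mu>\<in>Mset (c # cs). D s \<theta> (pre @ map (f \<mu>) (c # cs)))
      = (\<Sum>(S, \<mu>')\<in>(insert {root c} (markings c)) \<times> Mset cs. D s \<theta> (pre @ map (f (S \<union> \<mu>')) (c # cs)))"
    unfolding Mset_Cons[OF disj] by (subst sum.reindex[OF inj]) (simp add: case_prod_beta)
  also have "\<dots> = (\<Sum>(S, \<mu>')\<in>(insert {root c} (markings c)) \<times> Mset cs. D s \<theta> ((pre @ [f S c]) @ map (f \<mu>') cs))"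
    by (rule sum.cong[OF refl], clarify, rule g) (use Sl in auto)
  also have "\<dots> = (\<Sum>S\<in>insert {root c} (markings c). \<Sum>\<mu>'\<in>Mset cs. D s \<theta> ((pre @ [f S c]) @ map (f \<mu>') cs))"
    by (rule sum.cartesian_product[symmetric])
  also have "\<dots> = (\<Sum>\<mu>'\<in>Mset cs. D s \<theta> ((pre @ [A c]) @ map (f \<mu>') cs))
      + (\<Sum>S\<in>markings c. \<Sum>\<mu>'\<in>Mset cs. D s \<theta> ((pre @ [B c S]) @ map (f \<mu>') cs))"
    using rc finite_markings[of c] by (simp add: fS1 fS2)
  also have "\<dots> = D s \<theta> ((pre @ [A c]) @ map (\<lambda>c. A c + (\<Sum>\<nu>\<in>markings c. B c \<nu>)) cs)
      + (\<Sum>S\<in>markings c. D s \<theta> ((pre @ [B c S]) @ map (\<lambda>c. A c + (\<Sum>\<nu>\<in>markings c. B c \<nu>)) cs))"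
    by (simp only: IH)
  also have "\<dots> = D s \<theta> (pre @ map (\<lambda>c. A c + (\<Sum>\<nu>\<in>markings c. B c \<nu>)) (c # cs))"
    using D_add[OF D] D_sum[OF D finite_markings] by simp
  finally show ?case unfolding f_def by simp
qed

lemma split_int_sum:
  fixes f :: "int \<Rightarrow> 'v::comm_monoid_add"
  assumes "l \<ge> 0" "k \<ge> 0"
  shows "(\<Sum>i\<in>{1..l+k}. f i) = (\<Sum>i\<in>{1..l}. f i) + (\<Sum>i\<in>{1..k}. f (l + i))"
proof -
  have "{1..l+k} = {1..l} \<union> {l+1..l+k}" using assms by auto
  then have "(\<Sum>i\<in>{1..l+k}. f i) = (\<Sum>i\<in>{1..l}. f i) + (\<Sum>i\<in>{l+1..l+k}. f i)"
    by (simp add: sum.union_disjoint)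
  also have "(\<Sum>i\<in>{l+1..l+k}. f i) = (\<Sum>i\<in>{1..k}. f (l + i))"
    by (rule sum.reindex_bij_witness[of _ "\<lambda>i. i + l" "\<lambda>i. i - l"]) auto
  finally show ?thesis .
qed

lemma main_aux:
  assumes D: "sym_multilinear D" and l: "l \<ge> 1"
  shows "distinct (label_list t) \<Longrightarrow> a \<ge> 1 \<Longrightarrow>
    Etree \<beta> D \<theta> t (l + a) n = (\<Sum>\<mu>\<in>markings t. calE \<beta> D \<theta> t \<mu> a n l)"
proof (induction t arbitrary: a)
  case (LNode x cs)
  have dc: "distinct (label_list c)" if "c \<in> set cs" for c
    using LNode.prems(1) that by (auto simp: distinct_concat_iff)
  have dcs: "distinct (concat (map label_list cs))" using LNode.prems(1) by simp
  have xn: "x \<notin> (\<Union>c\<in>set cs. labels c)" using LNode.prems(1) by (auto simp: labels_def)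
  define A where "A = (\<lambda>c. \<Sum>l'\<in>{1..l}. Etree \<beta> D \<theta> c l' n)"
  define B where "B = (\<lambda>b c \<nu>. \<Sum>l'\<in>{1..a+b}. calE \<beta> D \<theta> c \<nu> l' n l)"
  have inner: "(\<Sum>l1\<in>{1..l + a + b}. Etree \<beta> D \<theta> c l1 n) = A c + (\<Sum>\<nu>\<in>markings c. B b c \<nu>)"
    if c: "c \<in> set cs" and b: "b \<ge> 0" for c b
  proof -
    have "(\<Sum>l1\<in>{1..l + (a + b)}. Etree \<beta> D \<theta> c l1 n)
        = A c + (\<Sum>a'\<in>{1..a+b}. Etree \<beta> D \<theta> c (l + a') n)"
      unfolding A_def using l b LNode.prems(2) by (intro split_int_sum) auto
    also have "(\<Sum>a'\<in>{1..a+b}. Etree \<beta> D \<theta> c (l + a') n)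
        = (\<Sum>a'\<in>{1..a+b}. \<Sum>\<nu>\<in>markings c. calE \<beta> D \<theta> c \<nu> a' n l)"
      by (rule sum.cong[OF refl]) (rule LNode.IH[OF c dc[OF c]], auto)
    also have "\<dots> = (\<Sum>\<nu>\<in>markings c. B b c \<nu>)"
      unfolding B_def by (rule sum.swap)
    finally show ?thesis by (simp add: add.assoc)
  qed
  have "Etree \<beta> D \<theta> (LNode x cs) (l + a) n
      = (\<Sum>b\<in>{0..n-l-a}. \<beta> ^ nat b *\<^sub>R D (n - l - a - b) \<theta> (map (\<lambda>c. A c + (\<Sum>\<nu>\<in>markings c. B b c \<nu>)) cs))"
  proof -
    have e: "n - (l + a) = n - l - a" by simp
    show ?thesis unfolding Etree.simps e
    proof (rule sum.cong[OF refl])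
      fix b assume "b \<in> {0..n-l-a}"
      then have b: "b \<ge> 0" by simp
      have mm: "map (\<lambda>c. \<Sum>l1\<in>{1..l + a + b}. Etree \<beta> D \<theta> c l1 n) cs
          = map (\<lambda>c. A c + (\<Sum>\<nu>\<in>markings c. B b c \<nu>)) cs"
        using inner[OF _ b] by simp
      then show "\<beta> ^ nat b *\<^sub>R D (n - l - a - b) \<theta> (map (\<lambda>c. \<Sum>l1\<in>{1..l + a + b}. Etree \<beta> D \<theta> c l1 n) cs)
          = \<beta> ^ nat b *\<^sub>R D (n - l - a - b) \<theta> (map (\<lambda>c. A c + (\<Sum>\<nu>\<in>markings c. B b c \<nu>)) cs)"
        by (simp only: mm)
    qed
  qed
  also have "\<dots> = (\<Sum>b\<in>{0..n-l-a}. \<beta> ^ nat b *\<^sub>R (\<Sum>\<mu>\<in>Mset cs.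
        D (n - l - a - b) \<theta> (map (\<lambda>c. if root c \<in> \<mu> then A c else B b c (\<mu> \<inter> labels c)) cs)))"
    using expand[OF D dcs, where pre = "[]"] by simp
  also have "\<dots> = (\<Sum>\<mu>\<in>Mset cs. \<Sum>b\<in>{0..n-l-a}. \<beta> ^ nat b *\<^sub>R
        D (n - l - a - b) \<theta> (map (\<lambda>c. if root c \<in> \<mu> then A c else B b c (\<mu> \<inter> labels c)) cs))"
    by (simp add: scaleR_sum_right sum.swap[of _ "{0..n-l-a}"])
  also have "\<dots> = (\<Sum>\<mu>\<in>markings (LNode x cs). calE \<beta> D \<theta> (LNode x cs) \<mu> a n l)"
    unfolding markings_LNode[OF xn] A_def B_def by simp
  finally show ?case .
qed


theorem mainTheorem6:
  fixes \<beta> :: real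
    and D :: "int \<Rightarrow> 'v::real_vector \<Rightarrow> 'v list \<Rightarrow> 'v"
    and \<theta> :: 'v
    and t :: ltree
    and m :: nat
    and n l a :: int
  assumes "0 < \<beta>" and "\<beta> < 1"
    and "sym_multilinear D"
    and "m \<ge> 2"
    and "labeled_tree_on t {1..m}"
    and "l \<ge> 1" and "a \<ge> 1"
  shows "Etree \<beta> D \<theta> t (l + a) n = (\<Sum>\<mu>\<in>markings t. calE \<beta> D \<theta> t \<mu> a n l)"
  using main_aux[OF assms(3) assms(6)] assms(5,7) by (auto simp: labeled_tree_on_def)

end
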